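(* Let $n\ge2$, let $a=(a_1,\dots,a_n)$ and $b=(b_1,\dots,b_n)$ be real sequences, and let $t=(t_1,\dots,t_n)\in T_a\cap T_b$. Then $$\sum_{i=1}^n a_ib_i-\frac1n\sum_{i=1}^n a_i\sum_{i=1}^n b_i\ge K_n(t)\sum_{i=1}^n\Big(t_i-\frac1n\sum_{j=1}^n t_j\Big)a_i\cdot\sum_{i=1}^n\Big(t_i-\frac1n\sum_{j=1}^n t_j\Big)b_i,$$ where $K_n(t)=\left(\sum_{i=1}^n t_i^2-\frac1n\big(\sum_{i=1}^n t_i\big)^2\right)^{-1}$.
   Context: For a real sequence $(x_i)$, $\Delta x_i=x_{i+1}-x_i$. "Increasing" means strictly increasing. For a real sequence $a=(a_i)_{i=1}^n$, $T_a$ denotes the set of increasing real sequences $(t_i)_{i=1}^n$ such that $(\Delta a_i/\Delta t_i)_{i=1}^{n-1}$ is non-decreasing. *)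

theory Defs
  imports Complex_Main
begin

text \<open>Sequences of length n are modelled as functions nat => real, indexed by 1..n.\<close>

definition fdiff :: "(nat \<Rightarrow> real) \<Rightarrow> nat \<Rightarrow> real" where
  "fdiff x i = x (Suc i) - x i"

definition increasing_seq :: "nat \<Rightarrow> (nat \<Rightarrow> real) \<Rightarrow> bool" where
  "increasing_seq n t \<longleftrightarrow> (\<forall>i j. 1 \<le> i \<longrightarrow> i < j \<longrightarrow> j \<le> n \<longrightarrow> t i < t j)"

definition T_set :: "nat \<Rightarrow> (nat \<Rightarrow> real) \<Rightarrow> (nat \<Rightarrow> real) set" where
  "T_set n a = {t. increasing_seq n t \<and>
     (\<forall>i j. 1 \<le> i \<longrightarrow> i \<le> j \<longrightarrow> j \<le> n - 1 \<longrightarrow>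
        fdiff a i / fdiff t i \<le> fdiff a j / fdiff t j)}"

definition K_n :: "nat \<Rightarrow> (nat \<Rightarrow> real) \<Rightarrow> real" where
  "K_n n t = inverse ((\<Sum>i=1..n. (t i)^2) - (1 / real n) * (\<Sum>i=1..n. t i)^2)"

end

theory Submission
  imports Defs
begin

lemma tele_le:
  fixes a t :: "nat \<Rightarrow> real"
  assumes "\<forall>m. i \<le> m \<longrightarrow> m < i + d \<longrightarrow> fdiff a m \<le> c * fdiff t m"
  shows "a (i+d) - a i \<le> c * (t (i+d) - t i)"
  using assms
proof (induction d)
  case 0 then show ?case by simp
next
  case (Suc d)
  have h1: "a (i+d) - a i \<le> c * (t (i+d) - t i)" using Suc by auto
  have h2: "fdiff a (i+d) \<le> c * fdiff t (i+d)" using Suc.prems by auto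
  show ?case using h1 h2 by (simp add: fdiff_def algebra_simps)
qed

lemma tele_ge:
  fixes a t :: "nat \<Rightarrow> real"
  assumes "\<forall>m. i \<le> m \<longrightarrow> m < i + d \<longrightarrow> fdiff a m \<ge> c * fdiff t m"
  shows "a (i+d) - a i \<ge> c * (t (i+d) - t i)"
  using assms
proof (induction d)
  case 0 then show ?case by simp
next
  case (Suc d)
  have h1: "a (i+d) - a i \<ge> c * (t (i+d) - t i)" using Suc by auto
  have h2: "fdiff a (i+d) \<ge> c * fdiff t (i+d)" using Suc.prems by auto
  show ?case using h1 h2 by (simp add: fdiff_def algebra_simps)
qed

lemma conv3:
  fixes a t :: "nat \<Rightarrow> real"
  assumes inc: "increasing_seq n t"
    and mon: "\<forall>i j. 1 \<le> i \<longrightarrow> i \<le> j \<longrightarrow> j \<le> n - 1 \<longrightarrow>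
        fdiff a i / fdiff t i \<le> fdiff a j / fdiff t j"
    and ij: "1 \<le> i" "i < j" "j < k" "k \<le> n"
  shows "a j * (t k - t i) \<le> a i * (t k - t j) + a k * (t j - t i)"
proof -
  define s where "s m = fdiff a m / fdiff t m" for m
  have pos: "fdiff t m > 0" if "1 \<le> m" "m \<le> n - 1" for m
    using inc that unfolding increasing_seq_def fdiff_def by auto
  have eq: "fdiff a m = s m * fdiff t m" if "1 \<le> m" "m \<le> n - 1" for m
    using pos[OF that] by (simp add: s_def)
  have A: "a (i + (j-i)) - a i \<le> s j * (t (i + (j-i)) - t i)"
  proof (rule tele_le, intro allI impI)
    fix m assume m: "i \<le> m" "m < i + (j - i)"
    have "s m \<le> s j" using mon m ij unfolding s_def by auto
    moreover have "fdiff t m > 0" using pos m ij by auto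
    ultimately show "fdiff a m \<le> s j * fdiff t m"
      using eq[of m] m ij by (simp add: mult_right_mono)
  qed
  have B: "a (j + (k-j)) - a j \<ge> s j * (t (j + (k-j)) - t j)"
  proof (rule tele_ge, intro allI impI)
    fix m assume m: "j \<le> m" "m < j + (k - j)"
    have "s j \<le> s m" using mon m ij unfolding s_def by auto
    moreover have "fdiff t m > 0" using pos m ij by auto
    ultimately show "fdiff a m \<ge> s j * fdiff t m"
      using eq[of m] m ij by (simp add: mult_right_mono)
  qed
  have A': "a j - a i \<le> s j * (t j - t i)" using A ij by simp
  have B': "a k - a j \<ge> s j * (t k - t j)" using B ij by simp
  have tkj: "t k - t j > 0" and tji: "t j - t i > 0"
    using inc ij unfolding increasing_seq_def by auto
  have "(a j - a i) * (t k - t j) \<le> s j * (t j - t i) * (t k - t j)"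
    using mult_right_mono[OF A', of "t k - t j"] tkj by simp
  also have "\<dots> \<le> (a k - a j) * (t j - t i)"
    using mult_right_mono[OF B', of "t j - t i"] tji by (simp add: algebra_simps)
  finally show ?thesis by (simp add: algebra_simps)
qed

lemma key:
  fixes x y t :: "nat \<Rightarrow> real"
  assumes n2: "n \<ge> 2" and inc: "increasing_seq n t"
    and cx: "\<And>i j k. 1 \<le> i \<Longrightarrow> i < j \<Longrightarrow> j < k \<Longrightarrow> k \<le> n \<Longrightarrow>
               x j * (t k - t i) \<le> x i * (t k - t j) + x k * (t j - t i)"
    and cy: "\<And>i j k. 1 \<le> i \<Longrightarrow> i < j \<Longrightarrow> j < k \<Longrightarrow> k \<le> n \<Longrightarrow>
               y j * (t k - t i) \<le> y i * (t k - t j) + y k * (t j - t i)"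
    and s0: "(\<Sum>i=1..n. x i) = 0" and s1: "(\<Sum>i=1..n. x i * t i) = 0"
  shows "(\<Sum>i=1..n. x i * y i) \<ge> 0"
proof (cases "\<exists>i\<in>{1..n}. x i < 0")
  case False
  then have nn: "\<forall>i\<in>{1..n}. x i \<ge> 0" by auto
  then have "\<forall>i\<in>{1..n}. x i = 0" using s0 sum_nonneg_eq_0_iff[of "{1..n}" x] by auto
  then show ?thesis by simp
next
  case True
  define N where "N = {i\<in>{1..n}. x i < 0}"
  have finN: "finite N" and neN: "N \<noteq> {}" using True unfolding N_def by auto
  have "\<exists>p q. 1 \<le> p \<and> p < q \<and> q \<le> n \<and>
          (\<forall>i\<in>{1..n}. (i < p \<or> q < i) \<longrightarrow> x i \<ge> 0) \<and>
          (\<forall>i. p < i \<longrightarrow> i < q \<longrightarrow> x i \<le> 0)"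
  proof -
    define p0 where "p0 = Min N"
    define q0 where "q0 = Max N"
    have p0N: "p0 \<in> N" and q0N: "q0 \<in> N" using finN neN Min_in Max_in p0_def q0_def by auto
    have p0le: "\<And>i. i \<in> N \<Longrightarrow> p0 \<le> i" using finN p0_def by auto
    have q0ge: "\<And>i. i \<in> N \<Longrightarrow> i \<le> q0" using finN q0_def by auto
    show ?thesis
    proof (cases "p0 < q0")
      case True
      have inner: "x i \<le> 0" if "p0 < i" "i < q0" for i
      proof -
        have b: "1 \<le> p0" "q0 \<le> n" "x p0 < 0" "x q0 < 0" using p0N q0N unfolding N_def by auto
        have h: "x i * (t q0 - t p0) \<le> x p0 * (t q0 - t i) + x q0 * (t i - t p0)"
          using cx[of p0 i q0] that b by auto
        have w1: "t q0 - t i > 0" "t i - t p0 > 0" "t q0 - t p0 > 0"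
          using inc that b unfolding increasing_seq_def by auto
        have "x p0 * (t q0 - t i) < 0" using b w1 by (simp add: mult_neg_pos)
        moreover have "x q0 * (t i - t p0) < 0" using b w1 by (simp add: mult_neg_pos)
        ultimately have "x i * (t q0 - t p0) < 0" using h by linarith
        then show ?thesis using w1 by (simp add: mult_less_0_iff)
      qed
      have outer: "\<forall>i\<in>{1..n}. (i < p0 \<or> q0 < i) \<longrightarrow> x i \<ge> 0"
      proof (intro ballI impI)
        fix i assume "i \<in> {1..n}" "i < p0 \<or> q0 < i"
        then have "i \<notin> N" using p0le q0ge by force
        then show "x i \<ge> 0" using \<open>i \<in> {1..n}\<close> unfolding N_def by auto
      qed
      show ?thesis
        apply (rule exI[of _ p0], rule exI[of _ q0])
        using True inner outer p0N q0N unfolding N_def by auto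
    next
      case False
      then have pq: "p0 = q0" using p0le q0N by force
      have NN: "\<And>i. i \<in> N \<Longrightarrow> i = p0" using p0le q0ge pq by force
      have m: "1 \<le> p0" "p0 \<le> n" using p0N unfolding N_def by auto
      have nonneg: "\<And>i. i \<in> {1..n} \<Longrightarrow> i \<noteq> p0 \<Longrightarrow> x i \<ge> 0"
        using NN unfolding N_def by force
      show ?thesis
      proof (cases "p0 < n")
        case True
        show ?thesis
          apply (rule exI[of _ p0], rule exI[of _ "Suc p0"])
          using True m nonneg by auto
      next
        case False
        show ?thesis
          apply (rule exI[of _ "p0 - 1"], rule exI[of _ p0])
          using False m n2 nonneg by auto
      qed
    qed
  qed
  then obtain p q where pq: "1 \<le> p" "p < q" "q \<le> n"
    and out: "\<forall>i\<in>{1..n}. (i < p \<or> q < i) \<longrightarrow> x i \<ge> 0"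
    and inn: "\<forall>i. p < i \<longrightarrow> i < q \<longrightarrow> x i \<le> 0" by blast
  define D where "D = t q - t p"
  have Dpos: "D > 0" using inc pq unfolding increasing_seq_def D_def by auto
  define E where "E i = y i * (t q - t p) - y p * (t q - t i) - y q * (t i - t p)" for i
  have trm: "x i * E i \<ge> 0" if i: "i \<in> {1..n}" for i
  proof -
    consider "i < p" | "i = p" | "p < i \<and> i < q" | "i = q" | "q < i" by linarith
    then show ?thesis
    proof cases
      case 1
      have "E i \<ge> 0" using cy[of i p q] 1 pq i unfolding E_def by (auto simp: algebra_simps)
      then show ?thesis using out i 1 by auto
    next
      case 2 then show ?thesis unfolding E_def by (simp add: algebra_simps)
    next
      case 3
      have "E i \<le> 0" using cy[of p i q] 3 pq i unfolding E_def by (auto simp: algebra_simps)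
      then show ?thesis using inn 3 by (simp add: mult_nonpos_nonpos)
    next
      case 4 then show ?thesis unfolding E_def by (simp add: algebra_simps)
    next
      case 5
      have "E i \<ge> 0" using cy[of p q i] 5 pq i unfolding E_def by (auto simp: algebra_simps)
      then show ?thesis using out i 5 by auto
    qed
  qed
  have "(\<Sum>i=1..n. x i * E i) = D * (\<Sum>i=1..n. x i * y i)
        - (y q - y p) * (\<Sum>i=1..n. x i * t i) - (y p * t q - y q * t p) * (\<Sum>i=1..n. x i)"
  proof -
    have "\<And>i. x i * E i = D * (x i * y i) - (y q - y p) * (x i * t i) - (y p * t q - y q * t p) * x i"
      unfolding E_def D_def by (simp add: algebra_simps)
    then show ?thesis by (simp add: sum_distrib_left sum_subtractf)
  qed
  then have "(\<Sum>i=1..n. x i * E i) = D * (\<Sum>i=1..n. x i * y i)" using s0 s1 by simp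
  moreover have "(\<Sum>i=1..n. x i * E i) \<ge> 0" using trm by (intro sum_nonneg) auto
  ultimately show ?thesis using Dpos by (simp add: zero_le_mult_iff)
qed

theorem corollary4p2:
  fixes n :: nat and a b t :: "nat \<Rightarrow> real"
  assumes "n \<ge> 2"
    and "t \<in> T_set n a \<inter> T_set n b"
  shows "(\<Sum>i=1..n. a i * b i) - (1 / real n) * (\<Sum>i=1..n. a i) * (\<Sum>i=1..n. b i)
     \<ge> K_n n t * (\<Sum>i=1..n. (t i - (1 / real n) * (\<Sum>j=1..n. t j)) * a i)
               * (\<Sum>i=1..n. (t i - (1 / real n) * (\<Sum>j=1..n. t j)) * b i)"
proof -
  have n2: "n \<ge> 2" by fact
  have inc: "increasing_seq n t" and mona: "\<forall>i j. 1 \<le> i \<longrightarrow> i \<le> j \<longrightarrow> j \<le> n - 1 \<longrightarrow>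
        fdiff a i / fdiff t i \<le> fdiff a j / fdiff t j"
    and monb: "\<forall>i j. 1 \<le> i \<longrightarrow> i \<le> j \<longrightarrow> j \<le> n - 1 \<longrightarrow>
        fdiff b i / fdiff t i \<le> fdiff b j / fdiff t j"
    using assms(2) unfolding T_set_def by auto
  define tb where "tb = (1 / real n) * (\<Sum>j=1..n. t j)"
  define ab where "ab = (1 / real n) * (\<Sum>j=1..n. a j)"
  define Cta where "Cta = (\<Sum>i=1..n. (t i - tb) * a i)"
  define Ctb where "Ctb = (\<Sum>i=1..n. (t i - tb) * b i)"
  define V where "V = (\<Sum>i=1..n. (t i)^2) - (1 / real n) * (\<Sum>i=1..n. t i)^2"
  define \<alpha> where "\<alpha> = Cta / V"
  define x where "x i = a i - ab - \<alpha> * (t i - tb)" for i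
  have npos: "real n > 0" using n2 by simp
  have St: "(\<Sum>i=1..n. t i) = real n * tb" unfolding tb_def using npos by simp
  have Sa: "(\<Sum>i=1..n. a i) = real n * ab" unfolding ab_def using npos by simp
  have Sd: "(\<Sum>i=1..n. (t i - tb)) = 0" using St by (simp add: sum_subtractf)
  have Vt: "V = (\<Sum>i=1..n. (t i - tb) * t i)"
    unfolding V_def using St npos
    by (simp add: sum_subtractf left_diff_distrib sum_distrib_left[symmetric] power2_eq_square
        sum_distrib_right[symmetric])
  have Vsq: "V = (\<Sum>i=1..n. (t i - tb)^2)"
  proof -
    have "(\<Sum>i=1..n. (t i - tb)^2) = (\<Sum>i=1..n. (t i - tb) * t i) - (\<Sum>i=1..n. tb * (t i - tb))"
    proof -
      have "\<And>i. (t i - tb)^2 = (t i - tb) * t i - tb * (t i - tb)"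
        by (simp add: power2_eq_square algebra_simps)
      then show ?thesis by (simp only: sum_subtractf)
    qed
    moreover have "(\<Sum>i=1..n. tb * (t i - tb)) = 0" using Sd by (simp add: sum_distrib_left[symmetric])
    ultimately show ?thesis using Vt by simp
  qed
  have Vpos: "V > 0"
  proof -
    have t12: "t 1 < t 2" using inc n2 unfolding increasing_seq_def by auto
    have "(\<Sum>i\<in>{1,2}. (t i - tb)^2) \<le> (\<Sum>i=1..n. (t i - tb)^2)"
      by (rule sum_mono2) (use n2 in auto)
    moreover have "(\<Sum>i\<in>{1,2}. (t i - tb)^2) > 0"
    proof -
      have "t 1 - tb \<noteq> 0 \<or> t 2 - tb \<noteq> 0" using t12 by auto
      then have "(t 1 - tb)^2 + (t 2 - tb)^2 > 0"
        by (metis add_nonneg_pos add_pos_nonneg zero_le_power2 zero_less_power2)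
      then show ?thesis by simp
    qed
    ultimately show ?thesis using Vsq by linarith
  qed
  have s0: "(\<Sum>i=1..n. x i) = 0"
    unfolding x_def using Sa Sd by (simp add: sum_subtractf sum_distrib_left[symmetric])
  have Cta2: "Cta = (\<Sum>i=1..n. x i * t i) + \<alpha> * V - 0"
  proof -
    have "\<And>i. x i * t i = (t i - tb) * a i + tb * a i - ab * t i - \<alpha> * ((t i - tb) * t i)"
      unfolding x_def by (simp add: algebra_simps)
    then have "(\<Sum>i=1..n. x i * t i) = Cta + tb * (\<Sum>i=1..n. a i) - ab * (\<Sum>i=1..n. t i) - \<alpha> * V"
      unfolding Cta_def Vt by (simp add: sum_subtractf sum.distrib sum_distrib_left)
    then show ?thesis using Sa St by (simp add: algebra_simps)
  qed
  have s1: "(\<Sum>i=1..n. x i * t i) = 0"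
    using Cta2 Vpos unfolding \<alpha>_def by simp
  have ca: "\<And>i j k. 1 \<le> i \<Longrightarrow> i < j \<Longrightarrow> j < k \<Longrightarrow> k \<le> n \<Longrightarrow>
               a j * (t k - t i) \<le> a i * (t k - t j) + a k * (t j - t i)"
    using conv3[OF inc mona] by blast
  have cb: "\<And>i j k. 1 \<le> i \<Longrightarrow> i < j \<Longrightarrow> j < k \<Longrightarrow> k \<le> n \<Longrightarrow>
               b j * (t k - t i) \<le> b i * (t k - t j) + b k * (t j - t i)"
    using conv3[OF inc monb] by blast
  have cx: "\<And>i j k. 1 \<le> i \<Longrightarrow> i < j \<Longrightarrow> j < k \<Longrightarrow> k \<le> n \<Longrightarrow>
               x j * (t k - t i) \<le> x i * (t k - t j) + x k * (t j - t i)"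
  proof -
    fix i j k assume h: "1 \<le> i" "i < j" "j < k" "k \<le> n"
    have "x i * (t k - t j) + x k * (t j - t i) - x j * (t k - t i)
        = a i * (t k - t j) + a k * (t j - t i) - a j * (t k - t i)"
      unfolding x_def by (simp add: algebra_simps)
    then show "x j * (t k - t i) \<le> x i * (t k - t j) + x k * (t j - t i)"
      using ca[OF h] by linarith
  qed
  have K: "(\<Sum>i=1..n. x i * b i) \<ge> 0" by (rule key[OF n2 inc cx cb s0 s1])
  have eq: "(\<Sum>i=1..n. x i * b i) = (\<Sum>i=1..n. a i * b i) - ab * (\<Sum>i=1..n. b i) - \<alpha> * Ctb"
  proof -
    have "\<And>i. x i * b i = a i * b i - ab * b i - \<alpha> * ((t i - tb) * b i)"
      unfolding x_def by (simp add: algebra_simps)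
    then show ?thesis unfolding Ctb_def by (simp add: sum_subtractf sum_distrib_left)
  qed
  have "K_n n t * Cta * Ctb = \<alpha> * Ctb"
    unfolding K_n_def \<alpha>_def V_def[symmetric] by (simp add: divide_inverse)
  moreover have "(1 / real n) * (\<Sum>i=1..n. a i) * (\<Sum>i=1..n. b i) = ab * (\<Sum>i=1..n. b i)"
    unfolding ab_def by simp
  ultimately show ?thesis using K eq unfolding Cta_def Ctb_def tb_def by linarith
qed

end
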